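(* Consider the SBCM with parameters $\gamma>0$ and $\delta\ge0$, and let $\mathbf{x}$ be a linearly stable steady state. Then for each persuadable node $i\in\mathcal{P}$ there exists a neighbor $j\sim i$ such that $$|x_i-x_j|\le\sqrt{\max\{\delta,\gamma^{-1}\}}.$$
   Context: Let $\mathcal{G}$ be a finite undirected unweighted graph without self-loops, with node set $\mathcal{N}$, adjacency written $i\sim j$, partitioned into zealots $\mathcal{Z}$ and persuadable nodes $\mathcal{P}=\mathcal{N}\setminus\mathcal{Z}$ (each persuadable node has at least one neighbor). The influence function is $w(x_i,x_j)=\frac{1}{1+e^{\gamma(x_i-x_j)^2-\gamma\delta}}$ if $i\sim j$ and $0$ otherwise. The SBCM is $\frac{dx_i}{dt}=f_i(\mathbf{x})=\frac{\sum_j w(x_i,x_j)(x_j-x_i)}{\sum_j w(x_i,x_j)}$ for $i\in\mathcal{P}$ and $\frac{dx_i}{dt}=0$ for $i\in\mathcal{Z}$. A steady state is $\mathbf{x}$ with all $f_i(\mathbf{x})=0$. It is linearly stable if all eigenvalues of $\mathbf{J}_{\mathcal{P}}=(\partial f_i/\partial x_j)_{i,j\in\mathcal{P}}$ at $\mathbf{x}$ are strictly negative. *)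

theory Defs
  imports "HOL-Analysis.Analysis"
begin

definition sbcm_graph :: "'a set \<Rightarrow> ('a \<Rightarrow> 'a \<Rightarrow> bool) \<Rightarrow> 'a set \<Rightarrow> bool" where
  "sbcm_graph N adj Z \<longleftrightarrow> finite N \<and> Z \<subseteq> N
     \<and> (\<forall>i j. adj i j \<longrightarrow> i \<in> N \<and> j \<in> N)
     \<and> (\<forall>i j. adj i j \<longrightarrow> adj j i)
     \<and> (\<forall>i. \<not> adj i i)
     \<and> (\<forall>i \<in> N - Z. \<exists>j. adj i j)"

definition sbcm_w :: "real \<Rightarrow> real \<Rightarrow> ('a \<Rightarrow> 'a \<Rightarrow> bool) \<Rightarrow> 'a \<Rightarrow> 'a \<Rightarrow> real \<Rightarrow> real \<Rightarrow> real" where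
  "sbcm_w \<gamma> \<delta> adj i j xi xj =
     (if adj i j then 1 / (1 + exp (\<gamma> * (xi - xj)\<^sup>2 - \<gamma> * \<delta>)) else 0)"

definition sbcm_f :: "real \<Rightarrow> real \<Rightarrow> 'a set \<Rightarrow> ('a \<Rightarrow> 'a \<Rightarrow> bool) \<Rightarrow> ('a \<Rightarrow> real) \<Rightarrow> 'a \<Rightarrow> real" where
  "sbcm_f \<gamma> \<delta> N adj x i =
     (\<Sum>j\<in>N. sbcm_w \<gamma> \<delta> adj i j (x i) (x j) * (x j - x i))
     / (\<Sum>j\<in>N. sbcm_w \<gamma> \<delta> adj i j (x i) (x j))"

text \<open>Steady state: f_i(x) = 0 for all persuadable i (zealots have zero derivative).\<close>
definition sbcm_steady :: "real \<Rightarrow> real \<Rightarrow> 'a set \<Rightarrow> ('a \<Rightarrow> 'a \<Rightarrow> bool) \<Rightarrow> 'a set \<Rightarrow> ('a \<Rightarrow> real) \<Rightarrow> bool" where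
  "sbcm_steady \<gamma> \<delta> N adj Z x \<longleftrightarrow> (\<forall>i \<in> N - Z. sbcm_f \<gamma> \<delta> N adj x i = 0)"

definition sbcm_jac :: "real \<Rightarrow> real \<Rightarrow> 'a set \<Rightarrow> ('a \<Rightarrow> 'a \<Rightarrow> bool) \<Rightarrow> ('a \<Rightarrow> real) \<Rightarrow> 'a \<Rightarrow> 'a \<Rightarrow> real" where
  "sbcm_jac \<gamma> \<delta> N adj x i j = deriv (\<lambda>t. sbcm_f \<gamma> \<delta> N adj (x(j := t)) i) (x j)"

definition is_eigenvalue_on :: "'a set \<Rightarrow> ('a \<Rightarrow> 'a \<Rightarrow> real) \<Rightarrow> complex \<Rightarrow> bool" where
  "is_eigenvalue_on P M mu \<longleftrightarrow> (\<exists>v :: 'a \<Rightarrow> complex. (\<exists>i \<in> P. v i \<noteq> 0)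
      \<and> (\<forall>i \<in> P. (\<Sum>j\<in>P. complex_of_real (M i j) * v j) = mu * v i))"

definition sbcm_lin_stable :: "real \<Rightarrow> real \<Rightarrow> 'a set \<Rightarrow> ('a \<Rightarrow> 'a \<Rightarrow> bool) \<Rightarrow> 'a set \<Rightarrow> ('a \<Rightarrow> real) \<Rightarrow> bool" where
  "sbcm_lin_stable \<gamma> \<delta> N adj Z x \<longleftrightarrow> sbcm_steady \<gamma> \<delta> N adj Z x \<and>
     (\<forall>mu. is_eigenvalue_on (N - Z) (sbcm_jac \<gamma> \<delta> N adj x) mu \<longrightarrow> Im mu = 0 \<and> Re mu < 0)"

end

theory Submission
  imports Defs
begin


lemma quad_zero:
  fixes a b :: real
  assumes "\<forall>t. a * t + b * t^2 \<ge> 0"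
  shows "a = 0"
proof (rule ccontr)
  assume "a \<noteq> 0"
  define e where "e = 1 / (\<bar>b\<bar> + 1)"
  have e: "e > 0" "b * e < 1" unfolding e_def
    by (auto simp: field_simps)
  have "a * (-a*e) + b * (-a*e)^2 = a^2 * e * (b*e - 1)"
    by (simp add: power2_eq_square algebra_simps)
  also have "\<dots> < 0" using e \<open>a \<noteq> 0\<close>
    by (intro mult_pos_neg) auto
  finally show False using assms by (metis not_le)
qed

definition QF :: "'a set \<Rightarrow> ('a \<Rightarrow> 'a \<Rightarrow> real) \<Rightarrow> ('a \<Rightarrow> real) \<Rightarrow> real" where
  "QF P L u = (\<Sum>a\<in>P. \<Sum>b\<in>P. u a * L a b * u b)"
definition NF :: "'a set \<Rightarrow> ('a \<Rightarrow> real) \<Rightarrow> ('a \<Rightarrow> real) \<Rightarrow> real" where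
  "NF P D u = (\<Sum>a\<in>P. D a * (u a)^2)"

lemma QF_pert:
  assumes "finite P" "k \<in> P" "\<forall>a\<in>P. \<forall>b\<in>P. L a b = L b a"
  shows "QF P L (\<lambda>a. v a + t * (if a = k then 1 else 0))
       = QF P L v + 2 * t * (\<Sum>b\<in>P. L k b * v b) + t^2 * L k k"
proof -
  define d where "d = (\<lambda>a. if a = k then 1 else (0::real))"
  have dm: "\<And>a x. d a * x = (if a = k then x else 0)" by (simp add: d_def)
  have "QF P L (\<lambda>a. v a + t * d a)
     = (\<Sum>a\<in>P. \<Sum>b\<in>P. v a * L a b * v b + t * (d a * (L a b * v b))
        + t * (d b * (v a * L a b)) + t^2 * (d a * (d b * L a b)))"
    unfolding QF_def by (intro sum.cong refl) (simp add: algebra_simps power2_eq_square)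
  also have "\<dots> = QF P L v + t * (\<Sum>a\<in>P. d a * (\<Sum>b\<in>P. L a b * v b))
        + t * (\<Sum>a\<in>P. \<Sum>b\<in>P. d b * (v a * L a b)) + t^2 * (\<Sum>a\<in>P. d a * (\<Sum>b\<in>P. d b * L a b))"
    unfolding QF_def by (simp add: sum.distrib sum_distrib_left)
  also have "(\<Sum>a\<in>P. \<Sum>b\<in>P. d b * (v a * L a b)) = (\<Sum>a\<in>P. v a * L a k)"
    using assms(1,2) by (simp add: dm sum.delta')
  also have "(\<Sum>a\<in>P. v a * L a k) = (\<Sum>b\<in>P. L k b * v b)"
    using assms(2,3) by (intro sum.cong) auto
  also have "(\<Sum>a\<in>P. d a * (\<Sum>b\<in>P. L a b * v b)) = (\<Sum>b\<in>P. L k b * v b)"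
    using assms(1,2) by (simp add: dm)
  also have "(\<Sum>a\<in>P. d a * (\<Sum>b\<in>P. d b * L a b)) = L k k"
    using assms(1,2) by (simp add: dm)
  finally show ?thesis unfolding d_def by simp
qed

lemma NF_pert:
  assumes "finite P" "k \<in> P"
  shows "NF P D (\<lambda>a. v a + t * (if a = k then 1 else 0))
       = NF P D v + 2 * t * (D k * v k) + t^2 * D k"
proof -
  define d where "d = (\<lambda>a. if a = k then 1 else (0::real))"
  have dm: "\<And>a x. d a * x = (if a = k then x else 0)" by (simp add: d_def)
  have "NF P D (\<lambda>a. v a + t * d a) = (\<Sum>a\<in>P. D a * (v a)^2 + 2 * t * (d a * (D a * v a)) + t^2 * (d a * D a))"
    unfolding NF_def by (intro sum.cong refl) (simp add: d_def algebra_simps power2_eq_square)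
  also have "\<dots> = NF P D v + 2 * t * (\<Sum>a\<in>P. d a * (D a * v a)) + t^2 * (\<Sum>a\<in>P. d a * D a)"
    unfolding NF_def by (simp add: sum.distrib sum_distrib_left)
  also have "\<dots> = NF P D v + 2 * t * (D k * v k) + t^2 * D k"
    using assms by (simp add: dm)
  finally show ?thesis unfolding d_def by simp
qed

lemma QF_cong: "(\<And>a. a \<in> P \<Longrightarrow> u a = v a) \<Longrightarrow> QF P L u = QF P L v"
  unfolding QF_def by (intro sum.cong refl) auto
lemma NF_cong: "(\<And>a. a \<in> P \<Longrightarrow> u a = v a) \<Longrightarrow> NF P D u = NF P D v"
  unfolding NF_def by (intro sum.cong refl) auto
lemma QF_scale: "QF P L (\<lambda>a. c * u a) = c^2 * QF P L u"
  unfolding QF_def by (simp add: sum_distrib_left power2_eq_square algebra_simps)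
lemma NF_scale: "NF P D (\<lambda>a. c * u a) = c^2 * NF P D u"
  unfolding NF_def by (simp add: sum_distrib_left power2_eq_square algebra_simps)

lemma QF_delta:
  assumes "finite P" "i \<in> P"
  shows "QF P L (\<lambda>a. if a = i then s else 0) = s^2 * L i i"
  unfolding QF_def using assms
  by (simp add: if_distrib[of "\<lambda>x. x * _"] if_distrib[of "\<lambda>x. _ * x"] power2_eq_square cong: if_cong)
lemma NF_delta:
  assumes "finite P" "i \<in> P"
  shows "NF P D (\<lambda>a. if a = i then s else 0) = s^2 * D i"
  unfolding NF_def using assms
  by (simp add: if_distrib[of "\<lambda>x. _ * x"] power2_eq_square cong: if_cong)

lemma cont_NF: "finite P \<Longrightarrow> continuous_map (product_topology (\<lambda>_. euclideanreal) P) euclideanreal (NF P D)"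
  unfolding NF_def power2_eq_square
  by (intro continuous_map_sum continuous_map_real_mult
      continuous_map_product_projection continuous_map_const[THEN iffD2]) auto

lemma cont_QF: "finite P \<Longrightarrow> continuous_map (product_topology (\<lambda>_. euclideanreal) P) euclideanreal (QF P L)"
  unfolding QF_def
  by (intro continuous_map_sum continuous_map_real_mult
      continuous_map_product_projection continuous_map_const[THEN iffD2]) auto

lemma gen_eig:
  fixes P :: "'a set" and L :: "'a \<Rightarrow> 'a \<Rightarrow> real" and D :: "'a \<Rightarrow> real"
  assumes fin: "finite P" and Dpos: "\<forall>k\<in>P. D k > 0"
    and sym: "\<forall>a\<in>P. \<forall>b\<in>P. L a b = L b a" and iP: "i \<in> P" and Lii: "L i i > 0"
  shows "\<exists>lam v. lam > 0 \<and> (\<exists>k\<in>P. v k \<noteq> 0) \<and>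
           (\<forall>k\<in>P. (\<Sum>j\<in>P. L k j * v j) = lam * D k * v k)"
proof -
  define X where "X = product_topology (\<lambda>_::'a. euclideanreal) P"
  define c where "c = 1 + (\<Sum>a\<in>P. 1 / D a)"
  define S where "S = {u \<in> topspace X. NF P D u \<in> {1}}"
  have topX: "topspace X = PiE P (\<lambda>_. UNIV)" unfolding X_def by simp
  have NFnn: "\<And>u a. a \<in> P \<Longrightarrow> D a * (u a)^2 \<le> NF P D u"
    unfolding NF_def using fin Dpos by (intro member_le_sum) auto
  have SB: "S \<subseteq> PiE P (\<lambda>_. {-c..c})"
  proof
    fix u assume u: "u \<in> S"
    show "u \<in> PiE P (\<lambda>_. {-c..c})"
    proof (rule PiE_I)
      fix a assume a: "a \<in> P"
      have "D a * (u a)^2 \<le> 1" using NFnn[OF a, of u] u by (simp add: S_def)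
      hence "(u a)^2 \<le> 1 / D a" using Dpos a by (simp add: field_simps)
      moreover have "1 / D a \<le> (\<Sum>a\<in>P. 1 / D a)"
        using fin Dpos a by (intro member_le_sum) auto
      moreover have "\<bar>u a\<bar> \<le> 1 + (u a)^2"
      proof -
        have "0 \<le> (\<bar>u a\<bar> - 1)^2" by simp
        hence "2 * \<bar>u a\<bar> \<le> 1 + \<bar>u a\<bar>^2" by (simp add: power2_eq_square algebra_simps)
        thus ?thesis by simp
      qed
      ultimately show "u a \<in> {-c..c}" unfolding c_def by auto
    next
      fix a assume "a \<notin> P" thus "u a = undefined" using u topX by (auto simp: S_def PiE_def extensional_def)
    qed
  qed
  have "compactin X (PiE P (\<lambda>_. {-c..c}))"
    unfolding X_def by (simp add: compactin_PiE compactin_euclidean_iff)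
  moreover have "closedin X S"
    unfolding S_def using cont_NF[OF fin] by (intro closedin_continuous_map_preimage) (auto simp: X_def)
  ultimately have cS: "compactin X S" using SB closed_compactin by blast
  have "compact (QF P L ` S)"
    using image_compactin[OF cS cont_QF[OF fin, of L, folded X_def]] compactin_euclidean_iff by metis
  define u0 where "u0 = restrict (\<lambda>a. if a = i then 1 / sqrt (D i) else 0) P"
  have Di: "D i > 0" using Dpos iP by auto
  have NFu0: "NF P D u0 = 1"
    using NF_cong[of P u0 "\<lambda>a. if a = i then 1 / sqrt (D i) else 0"] NF_delta[OF fin iP] Di
    by (simp add: u0_def power_divide)
  have QFu0: "QF P L u0 = L i i / D i"
    using QF_cong[of P u0 "\<lambda>a. if a = i then 1 / sqrt (D i) else 0"] QF_delta[OF fin iP] Di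
    by (simp add: u0_def power_divide)
  have u0S: "u0 \<in> S" unfolding S_def topX using NFu0 by (simp add: u0_def)
  obtain lam where lam: "lam \<in> QF P L ` S" "\<forall>t\<in>QF P L ` S. t \<le> lam"
    using compact_attains_sup[OF \<open>compact (QF P L ` S)\<close>] u0S by blast
  then obtain v where vS: "v \<in> S" and lamv: "lam = QF P L v" by auto
  have NFv: "NF P D v = 1" using vS by (simp add: S_def)
  have "QF P L u0 \<le> lam" using lam(2) u0S by blast
  moreover have "L i i / D i > 0" using Lii Di by simp
  ultimately have lampos: "lam > 0" using QFu0 by linarith
  have bound: "QF P L u \<le> lam * NF P D u" for u
  proof (cases "NF P D u = 0")
    case True
    have "\<forall>a\<in>P. D a * (u a)^2 = 0"
      using True unfolding NF_def using fin Dpos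
      by (subst sum_nonneg_eq_0_iff[symmetric]) auto
    hence "\<forall>a\<in>P. u a = 0" using Dpos by (metis less_irrefl mult_eq_0_iff power_eq_0_iff)
    hence "QF P L u = QF P L (\<lambda>_. 0)" by (intro QF_cong) auto
    thus ?thesis using True by (simp add: QF_def)
  next
    case False
    have "NF P D u \<ge> 0" unfolding NF_def using Dpos by (intro sum_nonneg) auto
    hence NFp: "NF P D u > 0" using False by linarith
    define s where "s = 1 / sqrt (NF P D u)"
    define w where "w = restrict (\<lambda>a. s * u a) P"
    have NFw: "NF P D w = s^2 * NF P D u"
      using NF_cong[of P w "\<lambda>a. s * u a"] NF_scale[of P D s u] by (simp add: w_def)
    have QFw: "QF P L w = s^2 * QF P L u"
      using QF_cong[of P w "\<lambda>a. s * u a"] QF_scale[of P L s u] by (simp add: w_def)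
    have s2: "s^2 = 1 / NF P D u" using NFp by (simp add: s_def power_divide)
    have "w \<in> S" unfolding S_def topX using NFw s2 NFp by (simp add: w_def)
    hence "QF P L w \<le> lam" using lam(2) by auto
    thus ?thesis using QFw s2 NFp by (simp add: field_simps)
  qed
  have eig: "(\<Sum>j\<in>P. L k j * v j) = lam * D k * v k" if kP: "k \<in> P" for k
  proof -
    have "\<forall>t. 2 * (lam * (D k * v k) - (\<Sum>b\<in>P. L k b * v b)) * t + (lam * D k - L k k) * t^2 \<ge> 0"
    proof
      fix t
      have "QF P L (\<lambda>a. v a + t * (if a = k then 1 else 0)) \<le> lam * NF P D (\<lambda>a. v a + t * (if a = k then 1 else 0))"
        by (rule bound)
      thus "2 * (lam * (D k * v k) - (\<Sum>b\<in>P. L k b * v b)) * t + (lam * D k - L k k) * t^2 \<ge> 0"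
        unfolding QF_pert[OF fin kP sym] NF_pert[OF fin kP] NFv lamv[symmetric]
        by (simp add: algebra_simps)
    qed
    from quad_zero[OF this] have "lam * (D k * v k) = (\<Sum>b\<in>P. L k b * v b)" by (simp only: mult_eq_0_iff) simp
    thus ?thesis by (simp add: mult.assoc)
  qed
  have "\<exists>k\<in>P. v k \<noteq> 0"
  proof (rule ccontr)
    assume "\<not> ?thesis"
    hence "NF P D v = NF P D (\<lambda>_. 0)" by (intro NF_cong) auto
    thus False using NFv by (simp add: NF_def)
  qed
  thus ?thesis using lampos eig by blast
qed



definition W0 :: "real \<Rightarrow> real \<Rightarrow> real \<Rightarrow> real" where
  "W0 \<gamma> \<delta> s = 1 / (1 + exp (\<gamma> * s^2 - \<gamma> * \<delta>))"
definition W0d :: "real \<Rightarrow> real \<Rightarrow> real \<Rightarrow> real" where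
  "W0d \<gamma> \<delta> s = - (2 * \<gamma> * s * exp (\<gamma> * s^2 - \<gamma> * \<delta>)) / (1 + exp (\<gamma> * s^2 - \<gamma> * \<delta>))^2"
definition GG :: "real \<Rightarrow> real \<Rightarrow> real \<Rightarrow> real" where
  "GG \<gamma> \<delta> s = W0 \<gamma> \<delta> s + s * W0d \<gamma> \<delta> s"

lemma W0_deriv: "(W0 \<gamma> \<delta> has_real_derivative W0d \<gamma> \<delta> s) (at s)"
proof -
  have pos: "1 + exp (\<gamma> * s^2 - \<gamma> * \<delta>) \<noteq> 0" by (smt (verit) exp_gt_zero)
  show ?thesis
    unfolding W0_def[abs_def] W0d_def
    apply (rule derivative_eq_intros refl | simp add: pos)+
    using pos by (simp add: field_simps power2_eq_square)
qed

lemma W_deriv: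
  assumes "(p has_real_derivative p') (at a)" "(q has_real_derivative q') (at a)"
  shows "((\<lambda>t. W0 \<gamma> \<delta> (p t - q t)) has_real_derivative W0d \<gamma> \<delta> (p a - q a) * (p' - q')) (at a)"
  using DERIV_chain2[OF W0_deriv DERIV_diff[OF assms]] .

lemma term_deriv:
  assumes "(p has_real_derivative p') (at a)" "(q has_real_derivative q') (at a)"
  shows "((\<lambda>t. W0 \<gamma> \<delta> (p t - q t) * (q t - p t)) has_real_derivative (q' - p') * GG \<gamma> \<delta> (p a - q a)) (at a)"
proof -
  have "((\<lambda>t. W0 \<gamma> \<delta> (p t - q t) * (q t - p t)) has_real_derivative
     W0d \<gamma> \<delta> (p a - q a) * (p' - q') * (q a - p a) + (q' - p') * W0 \<gamma> \<delta> (p a - q a)) (at a)"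
    by (rule DERIV_mult[OF W_deriv[OF assms] DERIV_diff[OF assms(2,1)]])
  moreover have "W0d \<gamma> \<delta> (p a - q a) * (p' - q') * (q a - p a) + (q' - p') * W0 \<gamma> \<delta> (p a - q a)
     = (q' - p') * GG \<gamma> \<delta> (p a - q a)"
    unfolding GG_def by (simp add: algebra_simps)
  ultimately show ?thesis by simp
qed

lemma upd_deriv: "((\<lambda>t. (x(j:=t)) k) has_real_derivative (if k = j then 1 else 0)) (at a)"
  by (cases "k = j") (auto intro!: derivative_eq_intros)

lemma sbcm_w_eq: "sbcm_w \<gamma> \<delta> adj i k a b = (if adj i k then W0 \<gamma> \<delta> (a - b) else 0)"
  by (simp add: sbcm_w_def W0_def)

definition Lf where
  "Lf \<gamma> \<delta> N adj x i j = (\<Sum>k\<in>N. if adj i k then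
      ((if k = j then 1 else 0) - (if i = j then 1 else 0)) * GG \<gamma> \<delta> (x i - x k) else 0)"

definition Dn where
  "Dn \<gamma> \<delta> N adj x i = (\<Sum>k\<in>N. sbcm_w \<gamma> \<delta> adj i k (x i) (x k))"

lemma num_deriv:
  "((\<lambda>t. \<Sum>k\<in>N. sbcm_w \<gamma> \<delta> adj i k ((x(j:=t)) i) ((x(j:=t)) k) * ((x(j:=t)) k - (x(j:=t)) i))
     has_real_derivative Lf \<gamma> \<delta> N adj x i j) (at (x j))"
  unfolding Lf_def
proof (rule DERIV_sum)
  fix k assume "k \<in> N"
  show "((\<lambda>t. sbcm_w \<gamma> \<delta> adj i k ((x(j:=t)) i) ((x(j:=t)) k) * ((x(j:=t)) k - (x(j:=t)) i))
     has_real_derivative (if adj i k then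
      ((if k = j then 1 else 0) - (if i = j then 1 else 0)) * GG \<gamma> \<delta> (x i - x k) else 0)) (at (x j))"
  proof (cases "adj i k")
    case True
    have "((\<lambda>t. W0 \<gamma> \<delta> ((x(j:=t)) i - (x(j:=t)) k) * ((x(j:=t)) k - (x(j:=t)) i))
      has_real_derivative ((if k = j then 1 else 0) - (if i = j then 1 else 0)) *
         GG \<gamma> \<delta> ((x(j:=x j)) i - (x(j:=x j)) k)) (at (x j))"
      by (rule term_deriv[OF upd_deriv upd_deriv])
    thus ?thesis using True by (simp add: sbcm_w_eq)
  next
    case False
    thus ?thesis by (simp add: sbcm_w_eq)
  qed
qed

lemma den_deriv:
  "\<exists>E. ((\<lambda>t. \<Sum>k\<in>N. sbcm_w \<gamma> \<delta> adj i k ((x(j:=t)) i) ((x(j:=t)) k))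
     has_real_derivative E) (at (x j))"
proof -
  have "((\<lambda>t. \<Sum>k\<in>N. sbcm_w \<gamma> \<delta> adj i k ((x(j:=t)) i) ((x(j:=t)) k))
     has_real_derivative (\<Sum>k\<in>N. if adj i k then W0d \<gamma> \<delta> (x i - x k) *
        ((if i = j then 1 else 0) - (if k = j then 1 else 0)) else 0)) (at (x j))"
  proof (rule DERIV_sum)
    fix k assume "k \<in> N"
    show "((\<lambda>t. sbcm_w \<gamma> \<delta> adj i k ((x(j:=t)) i) ((x(j:=t)) k))
     has_real_derivative (if adj i k then W0d \<gamma> \<delta> (x i - x k) *
        ((if i = j then 1 else 0) - (if k = j then 1 else 0)) else 0)) (at (x j))"
    proof (cases "adj i k")
      case True
      have "((\<lambda>t. W0 \<gamma> \<delta> ((x(j:=t)) i - (x(j:=t)) k))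
        has_real_derivative W0d \<gamma> \<delta> ((x(j:=x j)) i - (x(j:=x j)) k) *
          ((if i = j then 1 else 0) - (if k = j then 1 else 0))) (at (x j))"
        by (rule W_deriv[OF upd_deriv upd_deriv])
      thus ?thesis using True by (simp add: sbcm_w_eq)
    next
      case False
      thus ?thesis by (simp add: sbcm_w_eq)
    qed
  qed
  thus ?thesis by blast
qed

lemma jac_eq:
  assumes "sbcm_f \<gamma> \<delta> N adj x i = 0" "Dn \<gamma> \<delta> N adj x i \<noteq> 0"
  shows "sbcm_jac \<gamma> \<delta> N adj x i j = Lf \<gamma> \<delta> N adj x i j / Dn \<gamma> \<delta> N adj x i"
proof -
  obtain E where E: "((\<lambda>t. \<Sum>k\<in>N. sbcm_w \<gamma> \<delta> adj i k ((x(j:=t)) i) ((x(j:=t)) k))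
     has_real_derivative E) (at (x j))"
    using den_deriv[where N=N and \<gamma>=\<gamma> and \<delta>=\<delta> and adj=adj and i=i and x=x and j=j] by blast
  have num0: "(\<Sum>k\<in>N. sbcm_w \<gamma> \<delta> adj i k (x i) (x k) * (x k - x i)) = 0"
    using assms unfolding sbcm_f_def Dn_def by simp
  have "((\<lambda>t. sbcm_f \<gamma> \<delta> N adj (x(j := t)) i) has_real_derivative
      (Lf \<gamma> \<delta> N adj x i j * Dn \<gamma> \<delta> N adj x i - (\<Sum>k\<in>N. sbcm_w \<gamma> \<delta> adj i k (x i) (x k) * (x k - x i)) * E)
        / (Dn \<gamma> \<delta> N adj x i * Dn \<gamma> \<delta> N adj x i)) (at (x j))"
    unfolding sbcm_f_def
    using DERIV_divide[OF num_deriv[where N=N and \<gamma>=\<gamma> and \<delta>=\<delta> and adj=adj and i=i and x=x and j=j] E] assms(2)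
    by (simp add: Dn_def)
  hence "sbcm_jac \<gamma> \<delta> N adj x i j = (Lf \<gamma> \<delta> N adj x i j * Dn \<gamma> \<delta> N adj x i - 0 * E)
        / (Dn \<gamma> \<delta> N adj x i * Dn \<gamma> \<delta> N adj x i)"
    unfolding sbcm_jac_def num0 by (rule DERIV_imp_deriv)
  thus ?thesis using assms(2) by simp
qed


lemma GGaux: "1 < (e::real) \<Longrightarrow> 1 / (1 + e) + s * (- (2 * g * s * e) / (1 + e)^2) = ((1 + e) - 2 * g * s^2 * e) / (1 + e)^2"
proof -
  assume "1 < e"
  hence ne: "1 + e \<noteq> 0" by simp
  have a: "1 / (1 + e) = (1 + e) / (1 + e)^2" using ne by (simp add: power2_eq_square)
  have b: "s * (- (2 * g * s * e) / (1 + e)^2) = - (2 * g * s^2 * e) / (1 + e)^2"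
    by (simp add: power2_eq_square)
  show ?thesis unfolding a b by (simp add: diff_divide_distrib)
qed

lemma GG_even: "GG \<gamma> \<delta> (- s) = GG \<gamma> \<delta> s"
  by (simp add: GG_def W0_def W0d_def)

lemma GG_neg:
  assumes "\<gamma> > 0" "s^2 > \<delta>" "\<gamma> * s^2 > 1"
  shows "GG \<gamma> \<delta> s < 0"
proof -
  define e where "e = exp (\<gamma> * s^2 - \<gamma> * \<delta>)"
  have e1: "e > 1" unfolding e_def using assms by (simp add: algebra_simps)
  have "GG \<gamma> \<delta> s = ((1 + e) - 2 * \<gamma> * s^2 * e) / (1 + e)^2"
    using GGaux[OF e1] unfolding GG_def W0_def W0d_def e_def[symmetric] by simp
  moreover have "(2 * e) * (\<gamma> * s^2) > (2 * e) * 1"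
    using assms(3) e1 by (intro mult_strict_left_mono) auto
  hence "2 * \<gamma> * s^2 * e > 2 * e" by (simp add: algebra_simps)
  hence "(1 + e) - 2 * \<gamma> * s^2 * e < 0" using e1 by linarith
  moreover have "(1 + e)^2 > 0" using e1 by simp
  ultimately show ?thesis by (simp add: divide_neg_pos)
qed

lemma Lf_off:
  assumes "a \<noteq> b" "b \<in> N" "finite N"
  shows "Lf \<gamma> \<delta> N adj x a b = (if adj a b then GG \<gamma> \<delta> (x a - x b) else 0)"
proof -
  have "Lf \<gamma> \<delta> N adj x a b = (\<Sum>k\<in>N. if k = b then (if adj a b then GG \<gamma> \<delta> (x a - x b) else 0) else 0)"
    unfolding Lf_def using assms(1) by (intro sum.cong refl) auto
  thus ?thesis using assms by simp
qed

lemma Lf_diag: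
  assumes "\<not> adj a a"
  shows "Lf \<gamma> \<delta> N adj x a a = (\<Sum>k\<in>N. if adj a k then - GG \<gamma> \<delta> (x a - x k) else 0)"
  unfolding Lf_def using assms by (intro sum.cong refl) auto

theorem theorem2:
  fixes N Z :: "'a set" and adj :: "'a \<Rightarrow> 'a \<Rightarrow> bool" and x :: "'a \<Rightarrow> real"
    and \<gamma> \<delta> :: real
  assumes "sbcm_graph N adj Z"
    and "\<gamma> > 0" and "\<delta> \<ge> 0"
    and "sbcm_lin_stable \<gamma> \<delta> N adj Z x"
  shows "\<forall>i \<in> N - Z. \<exists>j. adj i j \<and> \<bar>x i - x j\<bar> \<le> sqrt (max \<delta> (1 / \<gamma>))"
proof (rule ccontr)
  assume "\<not> ?thesis"
  then obtain i where iP: "i \<in> N - Z" and far: "\<And>j. adj i j \<Longrightarrow> \<bar>x i - x j\<bar> > sqrt (max \<delta> (1 / \<gamma>))"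
    by (auto simp: not_le)
  define P where "P = N - Z"
  have G: "finite N" "\<And>a b. adj a b \<Longrightarrow> a \<in> N \<and> b \<in> N" "\<And>a b. adj a b \<Longrightarrow> adj b a"
     "\<And>a. \<not> adj a a" "\<And>a. a \<in> N - Z \<Longrightarrow> \<exists>b. adj a b"
    using assms(1) unfolding sbcm_graph_def by blast+
  have finP: "finite P" using G(1) by (simp add: P_def)
  have steady: "\<And>k. k \<in> P \<Longrightarrow> sbcm_f \<gamma> \<delta> N adj x k = 0"
    using assms(4) unfolding sbcm_lin_stable_def sbcm_steady_def P_def by blast
  have W0pos: "\<And>s. W0 \<gamma> \<delta> s > 0" unfolding W0_def by (smt (verit) exp_gt_zero divide_pos_pos)
  have Dpos: "\<forall>k\<in>P. Dn \<gamma> \<delta> N adj x k > 0"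
  proof
    fix k assume kP: "k \<in> P"
    then obtain b where b: "adj k b" using G(5) P_def by blast
    hence bN: "b \<in> N" using G(2) by blast
    show "Dn \<gamma> \<delta> N adj x k > 0" unfolding Dn_def
      using G(1) bN b W0pos
      by (intro sum_pos2[of N b]) (auto simp: sbcm_w_eq less_imp_le)
  qed
  have jac: "\<And>k j. k \<in> P \<Longrightarrow> sbcm_jac \<gamma> \<delta> N adj x k j = Lf \<gamma> \<delta> N adj x k j / Dn \<gamma> \<delta> N adj x k"
    using jac_eq steady Dpos by (metis less_irrefl)
  have sym: "\<forall>a\<in>P. \<forall>b\<in>P. Lf \<gamma> \<delta> N adj x a b = Lf \<gamma> \<delta> N adj x b a"
  proof (intro ballI)
    fix a b assume "a \<in> P" "b \<in> P"
    hence N: "a \<in> N" "b \<in> N" by (auto simp: P_def)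
    show "Lf \<gamma> \<delta> N adj x a b = Lf \<gamma> \<delta> N adj x b a"
    proof (cases "a = b")
      case False
      have "GG \<gamma> \<delta> (x b - x a) = GG \<gamma> \<delta> (x a - x b)"
        using GG_even[of \<gamma> \<delta> "x a - x b"] by simp
      thus ?thesis using Lf_off[OF False N(2) G(1)] Lf_off[of b a N] False N G(1) G(3)
        by auto
    qed simp
  qed
  have negs: "\<And>k. adj i k \<Longrightarrow> GG \<gamma> \<delta> (x i - x k) < 0"
  proof -
    fix k assume "adj i k"
    hence h: "sqrt (max \<delta> (1 / \<gamma>)) < sqrt ((x i - x k)^2)" using far by simp
    hence "max \<delta> (1 / \<gamma>) < (x i - x k)^2" using real_sqrt_less_iff by blast
    hence "\<delta> < (x i - x k)^2" "1 / \<gamma> < (x i - x k)^2" by auto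
    moreover from this(2) have "\<gamma> * (x i - x k)^2 > 1" using assms(2) by (simp add: field_simps)
    ultimately show "GG \<gamma> \<delta> (x i - x k) < 0" using GG_neg assms(2) by blast
  qed
  have Lii: "Lf \<gamma> \<delta> N adj x i i > 0"
  proof -
    obtain b where b: "adj i b" using G(5) iP by blast
    hence bN: "b \<in> N" using G(2) by blast
    show ?thesis unfolding Lf_diag[of adj i, OF G(4)]
      using G(1) bN b negs
      by (intro sum_pos2[of N b]) (auto simp: less_imp_le)
  qed
  obtain lam v where lv: "lam > 0" "\<exists>k\<in>P. v k \<noteq> 0"
      "\<forall>k\<in>P. (\<Sum>j\<in>P. Lf \<gamma> \<delta> N adj x k j * v j) = lam * Dn \<gamma> \<delta> N adj x k * v k"
    using gen_eig[OF finP Dpos sym _ Lii] iP P_def by blast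
  have "is_eigenvalue_on P (sbcm_jac \<gamma> \<delta> N adj x) (complex_of_real lam)"
    unfolding is_eigenvalue_on_def
  proof (intro exI[of _ "\<lambda>j. complex_of_real (v j)"] conjI ballI)
    show "\<exists>k\<in>P. complex_of_real (v k) \<noteq> 0" using lv(2) by simp
  next
    fix k assume kP: "k \<in> P"
    have "(\<Sum>j\<in>P. sbcm_jac \<gamma> \<delta> N adj x k j * v j) = (\<Sum>j\<in>P. Lf \<gamma> \<delta> N adj x k j * v j) / Dn \<gamma> \<delta> N adj x k"
      using jac[OF kP] by (simp add: sum_divide_distrib)
    also have "\<dots> = lam * v k" using lv(3) kP Dpos by (simp add: less_imp_neq[symmetric])
    finally have "(\<Sum>j\<in>P. sbcm_jac \<gamma> \<delta> N adj x k j * v j) = lam * v k" .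
    hence "complex_of_real (\<Sum>j\<in>P. sbcm_jac \<gamma> \<delta> N adj x k j * v j) = complex_of_real (lam * v k)" by simp
    thus "(\<Sum>j\<in>P. complex_of_real (sbcm_jac \<gamma> \<delta> N adj x k j) * complex_of_real (v j)) =
         complex_of_real lam * complex_of_real (v k)"
      by (simp add: of_real_sum)
  qed
  hence "Re (complex_of_real lam) < 0"
    using assms(4) unfolding sbcm_lin_stable_def P_def by blast
  thus False using lv(1) by simp
qed

end
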